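(* Let $\mathcal{G}$ be a strongly connected digraph with $N$ nodes and consider the distributed quantized weight-balancing algorithm described in the context, with step-size $\gamma(k)=2^{-n}$ for $2^n-1\le k\le 2^{n+1}-2$. If $\Vert\boldsymbol{\epsilon}(k)\Vert_1\ge 2N(N-1)\gamma(k)$, then $\Vert\boldsymbol{\epsilon}(k+N^{2N})\Vert_1\le\Vert\boldsymbol{\epsilon}(k)\Vert_1-2\gamma(k+N^{2N})$.
   Context: $\mathcal{G}=(\mathcal{V},\mathcal{E})$, $\mathcal{V}=\{1,\dots,N\}$, no self-loops; $\mathcal{N}_i^-=\{j:(j,i)\in\mathcal{E}\}$, $\mathcal{N}_i^+=\{j:(i,j)\in\mathcal{E}\}$, $d_i^+=|\mathcal{N}_i^+|$. Algorithm: $a_{ij}(0)=1$ if $j\in\mathcal{N}_i^-$ and $0$ otherwise; $b_i(k)=\sum_{j\in\mathcal{N}_i^-}a_{ij}(k)-\sum_{j\in\mathcal{N}_i^+}a_{ji}(k)$; $n_i(k)=1$ if $b_i(k)\ge d_i^+\gamma(k)$, else $0$; $a_{ij}(k+1)=a_{ij}(k)+n_j(k)\gamma(k)$ for $j\in\mathcal{N}_i^-$. $\boldsymbol{\epsilon}(k)=(|b_i(k)|)_{i=1}^N$. *)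

theory Defs
  imports Complex_Main
begin

definition in_nbrs :: "(nat \<times> nat) set \<Rightarrow> nat \<Rightarrow> nat set" where
  "in_nbrs E i = {j. (j, i) \<in> E}"

definition out_nbrs :: "(nat \<times> nat) set \<Rightarrow> nat \<Rightarrow> nat set" where
  "out_nbrs E i = {j. (i, j) \<in> E}"

definition out_deg :: "(nat \<times> nat) set \<Rightarrow> nat \<Rightarrow> nat" where
  "out_deg E i = card (out_nbrs E i)"

definition strongly_connected :: "nat \<Rightarrow> (nat \<times> nat) set \<Rightarrow> bool" where
  "strongly_connected N E \<longleftrightarrow> (\<forall>i\<in>{1..N}. \<forall>j\<in>{1..N}. (i, j) \<in> E\<^sup>*)"

definition gamma :: "nat \<Rightarrow> real" where
  "gamma k = (1 / 2) ^ (THE n::nat. 2 ^ n - 1 \<le> k \<and> k \<le> 2 ^ (n + 1) - 2)"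

text \<open>Imbalance b_i for a weight assignment a (a i j is the weight on arc (j,i)).\<close>
definition imbalance :: "(nat \<times> nat) set \<Rightarrow> (nat \<Rightarrow> nat \<Rightarrow> real) \<Rightarrow> nat \<Rightarrow> real" where
  "imbalance E a i = (\<Sum>j\<in>in_nbrs E i. a i j) - (\<Sum>j\<in>out_nbrs E i. a j i)"

definition flag :: "(nat \<times> nat) set \<Rightarrow> (nat \<Rightarrow> nat \<Rightarrow> real) \<Rightarrow> nat \<Rightarrow> nat \<Rightarrow> real" where
  "flag E a i k = (if imbalance E a i \<ge> real (out_deg E i) * gamma k then 1 else 0)"

primrec wts :: "(nat \<times> nat) set \<Rightarrow> nat \<Rightarrow> nat \<Rightarrow> nat \<Rightarrow> real" where
  "wts E 0 = (\<lambda>i j. if j \<in> in_nbrs E i then 1 else 0)"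
| "wts E (Suc k) = (\<lambda>i j. if j \<in> in_nbrs E i
       then wts E k i j + flag E (wts E k) j k * gamma k
       else wts E k i j)"

definition b :: "(nat \<times> nat) set \<Rightarrow> nat \<Rightarrow> nat \<Rightarrow> real" where
  "b E k i = imbalance E (wts E k) i"

definition eps_norm1 :: "nat \<Rightarrow> (nat \<times> nat) set \<Rightarrow> nat \<Rightarrow> real" where
  "eps_norm1 N E k = (\<Sum>i\<in>{1..N}. \<bar>b E k i\<bar>)"

end

theory Submission
  imports Defs
begin


lemma gamma_eq:
  assumes "2^n \<le> t+1" "t+1 < (2::nat)^(n+1)"
  shows "gamma t = (1/2)^n"
proof -
  have uniq: "m = n" if "2^m - 1 \<le> t \<and> t \<le> 2^(m+1) - (2::nat)" for m
  proof -
    have p1: "(1::nat) \<le> 2^m" by simp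
    have p2: "(2::nat) \<le> 2^(m+1)" by simp
    have a: "2^m \<le> t+1" "t+1 < (2::nat)^(m+1)" using that p1 p2 by linarith+
    show ?thesis
    proof (rule ccontr)
      assume "m \<noteq> n"
      then consider "m < n" | "n < m" by linarith
      then show False
      proof cases
        case 1
        then have "(2::nat)^(m+1) \<le> 2^n" by (intro power_increasing) auto
        then show False using a assms by linarith
      next
        case 2
        then have "(2::nat)^(n+1) \<le> 2^m" by (intro power_increasing) auto
        then show False using a assms by linarith
      qed
    qed
  qed
  have q1: "(1::nat) \<le> 2^n" by simp
  have q2: "(2::nat) \<le> 2^(n+1)" by simp
  have ex: "2^n - 1 \<le> t \<and> t \<le> 2^(n+1) - (2::nat)" using assms q1 q2 by linarith
  have "(THE n::nat. 2 ^ n - 1 \<le> t \<and> t \<le> 2 ^ (n + 1) - 2) = n"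
    by (rule the_equality) (use ex uniq in blast)+
  then show ?thesis unfolding gamma_def by simp
qed

lemma gamma_ex: "\<exists>n. 2^n \<le> t+1 \<and> t+1 < (2::nat)^(n+1)"
  using ex_power_ivl1[of 2 "t+1"] by auto

lemma gamma_pos: "gamma t > 0"
proof -
  obtain n where n: "2^n \<le> t+1" "t+1 < (2::nat)^(n+1)" using gamma_ex by blast
  show ?thesis using gamma_eq[OF n] by simp
qed

lemma gamma_step: "gamma t = gamma (Suc t) \<or> gamma t = 2 * gamma (Suc t)"
proof -
  obtain n where n: "2^n \<le> t+1" "t+1 < (2::nat)^(n+1)" using gamma_ex by blast
  show ?thesis
  proof (cases "t+2 < (2::nat)^(n+1)")
    case True
    then have "gamma (Suc t) = (1/2)^n" using n by (intro gamma_eq) auto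
    then show ?thesis using gamma_eq[OF n] by simp
  next
    case False
    then have e: "t+2 = 2^(n+1)" using n by linarith
    have "gamma (Suc t) = (1/2)^(n+1)" using e by (intro gamma_eq) auto
    then show ?thesis using gamma_eq[OF n] by simp
  qed
qed

lemma gamma_Suc_le: "gamma (Suc t) \<le> gamma t"
  using gamma_step[of t] gamma_pos[of "Suc t"] by auto

lemma gamma_antimono: "s \<le> t \<Longrightarrow> gamma t \<le> gamma s"
  by (rule lift_Suc_antimono_le[of gamma]) (auto simp: gamma_Suc_le)

lemma gamma_grid: "\<exists>z::int. gamma t = of_int z * gamma (Suc t)"
proof (cases "gamma t = gamma (Suc t)")
  case True
  then have "gamma t = of_int 1 * gamma (Suc t)" by simp
  then show ?thesis by blast
next
  case False
  then have "gamma t = of_int 2 * gamma (Suc t)" using gamma_step[of t] by simp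
  then show ?thesis by blast
qed




definition fires :: "(nat \<times> nat) set \<Rightarrow> nat \<Rightarrow> nat \<Rightarrow> bool" where
  "fires E t j \<longleftrightarrow> b E t j \<ge> real (out_deg E j) * gamma t"

lemma flag_eq: "flag E (wts E t) j t = (if fires E t j then 1 else 0)"
  by (simp add: flag_def fires_def b_def)

lemma b_step: "b E (Suc t) i = b E t i + gamma t * (\<Sum>j\<in>in_nbrs E i. flag E (wts E t) j t)
   - gamma t * real (out_deg E i) * flag E (wts E t) i t"
proof -
  have 1: "(\<Sum>j\<in>in_nbrs E i. wts E (Suc t) i j) = (\<Sum>j\<in>in_nbrs E i. wts E t i j) + gamma t * (\<Sum>j\<in>in_nbrs E i. flag E (wts E t) j t)"
  proof -
    have "(\<Sum>j\<in>in_nbrs E i. wts E (Suc t) i j) = (\<Sum>j\<in>in_nbrs E i. wts E t i j + flag E (wts E t) j t * gamma t)"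
      by (rule sum.cong) auto
    also have "\<dots> = (\<Sum>j\<in>in_nbrs E i. wts E t i j) + gamma t * (\<Sum>j\<in>in_nbrs E i. flag E (wts E t) j t)"
      by (simp add: sum.distrib sum_distrib_left mult.commute)
    finally show ?thesis .
  qed
  have 2: "(\<Sum>j\<in>out_nbrs E i. wts E (Suc t) j i) = (\<Sum>j\<in>out_nbrs E i. wts E t j i) + gamma t * real (out_deg E i) * flag E (wts E t) i t"
  proof -
    have "(\<Sum>j\<in>out_nbrs E i. wts E (Suc t) j i) = (\<Sum>j\<in>out_nbrs E i. wts E t j i + flag E (wts E t) i t * gamma t)"
      by (rule sum.cong) (auto simp: in_nbrs_def out_nbrs_def)
    also have "\<dots> = (\<Sum>j\<in>out_nbrs E i. wts E t j i) + gamma t * real (out_deg E i) * flag E (wts E t) i t"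
      by (simp add: sum.distrib out_deg_def)
    finally show ?thesis .
  qed
  show ?thesis unfolding b_def imbalance_def 1 2 by simp
qed

lemma sum_grid:
  assumes "\<forall>x\<in>A. \<exists>z::int. f x = of_int z * g"
  shows "\<exists>z::int. sum f A = of_int z * g"
proof -
  from assms obtain zf where "\<forall>x\<in>A. f x = of_int (zf x) * g" by metis
  then have "sum f A = of_int (sum zf A) * g" by (simp add: sum_distrib_right)
  then show ?thesis by blast
qed

lemma wts_grid: "\<exists>z::int. wts E t i j = of_int z * gamma t"
proof (induction t arbitrary: i j)
  case 0
  have g0: "gamma 0 = 1" using gamma_eq[of 0 0] by simp
  have "wts E 0 i j = of_int (if j \<in> in_nbrs E i then 1 else 0) * gamma 0" by (simp add: g0)
  then show ?case by blast
next
  case (Suc t)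
  obtain z0 where z0: "gamma t = of_int z0 * gamma (Suc t)" using gamma_grid by blast
  obtain z where z: "wts E t i j = of_int z * gamma t" using Suc by blast
  have w: "wts E (Suc t) i j = wts E t i j + (if j \<in> in_nbrs E i then flag E (wts E t) j t * gamma t else 0)"
    by simp
  have "wts E (Suc t) i j = of_int (z * z0 + (if j \<in> in_nbrs E i \<and> fires E t j then z0 else 0)) * gamma (Suc t)"
    unfolding w flag_eq z
    by (cases "j \<in> in_nbrs E i"; cases "fires E t j") (simp_all add: z0 algebra_simps)
  then show ?case by blast
qed

lemma b_grid: "\<exists>z::int. b E t i = of_int z * gamma t"
proof -
  obtain z1 where 1: "(\<Sum>j\<in>in_nbrs E i. wts E t i j) = of_int z1 * gamma t"
    using sum_grid[of "in_nbrs E i" "\<lambda>j. wts E t i j" "gamma t"] wts_grid by blast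
  obtain z2 where 2: "(\<Sum>j\<in>out_nbrs E i. wts E t j i) = of_int z2 * gamma t"
    using sum_grid[of "out_nbrs E i" "\<lambda>j. wts E t j i" "gamma t"] wts_grid by blast
  have "b E t i = of_int (z1 - z2) * gamma t" unfolding b_def imbalance_def 1 2 by (simp add: algebra_simps)
  then show ?thesis by blast
qed

lemma b_neg_le: "b E t i < 0 \<Longrightarrow> b E t i \<le> - gamma t"
proof -
  assume a: "b E t i < 0"
  obtain z where z: "b E t i = of_int z * gamma t" using b_grid by blast
  have "z < 0" using a z gamma_pos[of t] by (smt (verit) mult_nonneg_nonneg of_int_0_le_iff)
  then have "of_int z \<le> (-1::real)" by simp
  then have "of_int z * gamma t \<le> -1 * gamma t" using gamma_pos[of t] by (intro mult_right_mono) auto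
  then show ?thesis using z by simp
qed




definition hit :: "nat \<Rightarrow> (nat \<times> nat) set \<Rightarrow> nat \<Rightarrow> bool" where
  "hit N E t \<longleftrightarrow> (\<exists>i\<in>{1..N}. b E t i < 0 \<and> (\<exists>j\<in>in_nbrs E i. fires E t j))"

locale ws =
  fixes N :: nat and E :: "(nat \<times> nat) set"
  assumes N2: "N \<ge> 2" and Esub: "E \<subseteq> {1..N} \<times> {1..N}"
    and irr: "\<forall>i. (i, i) \<notin> E" and sc: "strongly_connected N E"
begin

lemma in_eq: "in_nbrs E i = {j \<in> {1..N}. (j, i) \<in> E}"
  using Esub by (auto simp: in_nbrs_def)

lemma out_eq: "out_nbrs E i = {j \<in> {1..N}. (i, j) \<in> E}"
  using Esub by (auto simp: out_nbrs_def)

lemma fin_in: "finite (in_nbrs E i)" by (simp add: in_eq)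
lemma fin_out: "finite (out_nbrs E i)" by (simp add: out_eq)

lemma deg_le: "out_deg E i \<le> N - 1"
proof (cases "i \<in> {1..N}")
  case True
  have "out_nbrs E i \<subseteq> {1..N} - {i}" using irr by (auto simp: out_eq)
  then have "card (out_nbrs E i) \<le> card ({1..N} - {i})" by (intro card_mono) auto
  then show ?thesis using True by (simp add: out_deg_def)
next
  case False
  then have "out_nbrs E i = {}" by (auto simp: out_eq dest: subsetD[OF Esub])
  then show ?thesis by (simp add: out_deg_def)
qed

lemma deg_pos: assumes "i \<in> {1..N}" shows "out_deg E i \<ge> 1"
proof -
  obtain w where w: "w \<in> {1..N}" "w \<noteq> i" using N2 assms
    by (metis One_nat_def atLeastAtMost_iff le_add_diff_inverse nat_le_linear not_less_eq_eq one_add_one plus_1_eq_Suc)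
  have "(i, w) \<in> E\<^sup>*" using sc assms w by (auto simp: strongly_connected_def)
  then obtain y where "(i, y) \<in> E" using w(2) by (metis converse_rtranclE)
  then have "out_nbrs E i \<noteq> {}" by (auto simp: out_nbrs_def)
  then show ?thesis using fin_out by (simp add: out_deg_def Suc_le_eq card_gt_0_iff)
qed

lemma dc: "(\<Sum>i\<in>{1..N}. \<Sum>j\<in>in_nbrs E i. g j) = (\<Sum>j\<in>{1..N}. real (out_deg E j) * g j)"
proof -
  have "(\<Sum>i\<in>{1..N}. \<Sum>j\<in>in_nbrs E i. g j) = (\<Sum>i\<in>{1..N}. \<Sum>j\<in>{j \<in> {1..N}. (j, i) \<in> E}. g j)"
    by (simp add: in_eq)
  also have "\<dots> = (\<Sum>j\<in>{1..N}. \<Sum>i\<in>{i \<in> {1..N}. (j, i) \<in> E}. g j)"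
    by (rule sum.swap_restrict) auto
  also have "\<dots> = (\<Sum>j\<in>{1..N}. real (out_deg E j) * g j)"
    by (simp add: out_deg_def out_eq)
  finally show ?thesis .
qed

lemma sum_b_zero: "(\<Sum>i\<in>{1..N}. b E t i) = 0"
proof -
  have "(\<Sum>i\<in>{1..N}. \<Sum>j\<in>in_nbrs E i. wts E t i j) = (\<Sum>i\<in>{1..N}. \<Sum>j\<in>{j \<in> {1..N}. (j, i) \<in> E}. wts E t i j)"
    by (simp add: in_eq)
  also have "\<dots> = (\<Sum>j\<in>{1..N}. \<Sum>i\<in>{i \<in> {1..N}. (j, i) \<in> E}. wts E t i j)"
    by (rule sum.swap_restrict) auto
  also have "\<dots> = (\<Sum>j\<in>{1..N}. \<Sum>i\<in>out_nbrs E j. wts E t i j)"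
    by (simp add: out_eq)
  finally show ?thesis unfolding b_def imbalance_def by (simp add: sum_subtractf)
qed

lemma node_ineq:
  "\<bar>b E (Suc t) i\<bar> \<le> \<bar>b E t i\<bar> + gamma t * (\<Sum>j\<in>in_nbrs E i. flag E (wts E t) j t)
     - gamma t * real (out_deg E i) * flag E (wts E t) i t
     - (if b E t i < 0 \<and> (\<exists>j\<in>in_nbrs E i. fires E t j) then 2 * gamma t else 0)"
proof -
  define r where "r = (\<Sum>j\<in>in_nbrs E i. flag E (wts E t) j t)"
  define B where "B = b E t i"
  define d where "d = real (out_deg E i)"
  define g where "g = gamma t"
  have g: "g > 0" using gamma_pos by (simp add: g_def)
  have r0: "r \<ge> 0" unfolding r_def by (intro sum_nonneg) (simp add: flag_eq)
  have r1: "r \<ge> 1" if R: "\<exists>j\<in>in_nbrs E i. fires E t j"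
  proof -
    obtain j where j: "j \<in> in_nbrs E i" "fires E t j" using R by blast
    have "flag E (wts E t) j t \<le> r" unfolding r_def
      by (rule member_le_sum) (use j fin_in in \<open>auto simp: flag_eq\<close>)
    then show ?thesis using j by (simp add: flag_eq)
  qed
  have gr0: "g * r \<ge> 0" using g r0 by simp
  have gr1: "g * r \<ge> g" if "\<exists>j\<in>in_nbrs E i. fires E t j" using r1[OF that] g
    using mult_left_mono[of 1 r g] by simp
  have d0: "d \<ge> 0" by (simp add: d_def)
  have st: "b E (Suc t) i = B + g * r - g * d * flag E (wts E t) i t"
    unfolding b_step B_def g_def r_def d_def ..
  have goal: "\<bar>B + g * r - g * d * flag E (wts E t) i t\<bar> \<le> \<bar>B\<bar> + g * r - g * d * flag E (wts E t) i t
     - (if B < 0 \<and> (\<exists>j\<in>in_nbrs E i. fires E t j) then 2 * g else 0)"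
  proof (cases "fires E t i")
    case True
    then have B: "B \<ge> d * g" by (simp add: fires_def B_def d_def g_def)
    moreover have "d * g \<ge> 0" using d0 g by simp
    moreover have "flag E (wts E t) i t = 1" using True by (simp add: flag_eq)
    ultimately show ?thesis using gr0 by (simp add: algebra_simps)
  next
    case False
    have f0: "flag E (wts E t) i t = 0" using False by (simp add: flag_eq)
    show ?thesis
    proof (cases "B < 0 \<and> (\<exists>j\<in>in_nbrs E i. fires E t j)")
      case True
      have "B \<le> - g" using True b_neg_le unfolding B_def g_def by blast
      then have "\<bar>B + g * r\<bar> \<le> \<bar>B\<bar> + g * r - 2 * g" using gr1 True by linarith
      moreover have z: "(if B < 0 \<and> (\<exists>j\<in>in_nbrs E i. fires E t j) then 2 * g else 0) = 2 * g"
        by (rule if_P[OF True])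
      ultimately show ?thesis unfolding z f0 by simp
    next
      case c2: False
      have "\<bar>B + g * r\<bar> \<le> \<bar>B\<bar> + g * r" using gr0 by linarith
      moreover have z: "(if B < 0 \<and> (\<exists>j\<in>in_nbrs E i. fires E t j) then 2 * g else 0) = 0"
        by (rule if_not_P[OF c2])
      ultimately show ?thesis unfolding z f0 by simp
    qed
  qed
  show ?thesis using goal unfolding st unfolding B_def g_def r_def d_def .
qed

lemma norm_step: "eps_norm1 N E (Suc t) \<le> eps_norm1 N E t - (if hit N E t then 2 * gamma t else 0)"
proof -
  let ?T = "\<lambda>i. (if b E t i < 0 \<and> (\<exists>j\<in>in_nbrs E i. fires E t j) then 2 * gamma t else 0)"
  let ?fl = "\<lambda>j. flag E (wts E t) j t"
  have "eps_norm1 N E (Suc t) \<le> (\<Sum>i\<in>{1..N}. \<bar>b E t i\<bar> + gamma t * (\<Sum>j\<in>in_nbrs E i. ?fl j)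
     - gamma t * real (out_deg E i) * ?fl i - ?T i)"
    unfolding eps_norm1_def by (rule sum_mono) (rule node_ineq)
  also have "\<dots> = eps_norm1 N E t + gamma t * (\<Sum>i\<in>{1..N}. \<Sum>j\<in>in_nbrs E i. ?fl j)
     - gamma t * (\<Sum>i\<in>{1..N}. real (out_deg E i) * ?fl i) - (\<Sum>i\<in>{1..N}. ?T i)"
    unfolding eps_norm1_def by (simp add: sum.distrib sum_subtractf sum_distrib_left mult.assoc)
  also have "\<dots> = eps_norm1 N E t - (\<Sum>i\<in>{1..N}. ?T i)"
    unfolding dc by simp
  also have "\<dots> \<le> eps_norm1 N E t - (if hit N E t then 2 * gamma t else 0)"
  proof (cases "hit N E t")
    case True
    then obtain i where i: "i \<in> {1..N}" "b E t i < 0 \<and> (\<exists>j\<in>in_nbrs E i. fires E t j)"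
      unfolding hit_def by blast
    have "?T i \<le> (\<Sum>i\<in>{1..N}. ?T i)"
      by (rule member_le_sum) (use i gamma_pos[of t] in auto)
    then show ?thesis using True i by simp
  next
    case False
    have "0 \<le> (\<Sum>i\<in>{1..N}. ?T i)" by (rule sum_nonneg) (use gamma_pos[of t] in auto)
    then show ?thesis using False by simp
  qed
  finally show ?thesis .
qed

lemma norm_mono: "s \<le> t \<Longrightarrow> eps_norm1 N E t \<le> eps_norm1 N E s"
proof (rule lift_Suc_antimono_le[of "eps_norm1 N E"])
  fix n show "eps_norm1 N E (Suc n) \<le> eps_norm1 N E n"
    using norm_step[of n] gamma_pos[of n] by (auto split: if_splits)
qed

end



primrec cnt :: "(nat \<Rightarrow> bool) \<Rightarrow> nat \<Rightarrow> nat \<Rightarrow> nat" where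
  "cnt P k 0 = 0"
| "cnt P k (Suc m) = cnt P k m + (if P (k + m) then 1 else 0)"

lemma cnt_mono: "(\<And>s. k \<le> s \<Longrightarrow> s < k + m \<Longrightarrow> P s \<Longrightarrow> Q s) \<Longrightarrow> cnt P k m \<le> cnt Q k m"
  by (induction m) auto

lemma cnt_zero: "(\<And>s. k \<le> s \<Longrightarrow> s < k + m \<Longrightarrow> \<not> P s) \<Longrightarrow> cnt P k m = 0"
  by (induction m) auto

lemma shrink: fixes x y g g' :: real
  assumes "x * g \<le> y" "0 \<le> y" "0 < g'" "g' \<le> g"
  shows "x * g' \<le> y"
proof (cases "x \<ge> 0")
  case True
  then have "x * g' \<le> x * g" using assms by (intro mult_left_mono) auto
  then show ?thesis using assms by linarith
next
  case False
  then have "x * g' \<le> 0" using assms by (simp add: mult_nonpos_nonneg)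
  then show ?thesis using assms by linarith
qed

context ws begin

lemma r_nonneg: "0 \<le> (\<Sum>j\<in>in_nbrs E i. flag E (wts E t) j t)"
  by (intro sum_nonneg) (simp add: flag_eq)

lemma r_ge1: assumes "\<exists>j\<in>in_nbrs E i. fires E t j"
  shows "1 \<le> (\<Sum>j\<in>in_nbrs E i. flag E (wts E t) j t)"
proof -
  obtain j where j: "j \<in> in_nbrs E i" "fires E t j" using assms by blast
  have "flag E (wts E t) j t \<le> (\<Sum>j\<in>in_nbrs E i. flag E (wts E t) j t)"
    by (rule member_le_sum) (use j fin_in in \<open>auto simp: flag_eq\<close>)
  then show ?thesis using j by (simp add: flag_eq)
qed

lemma r_zero: assumes "\<not> (\<exists>j\<in>in_nbrs E i. fires E t j)"
  shows "(\<Sum>j\<in>in_nbrs E i. flag E (wts E t) j t) = 0"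
  using assms by (intro sum.neutral) (auto simp: flag_eq)

lemma neg_not_fires: "b E t i < 0 \<Longrightarrow> \<not> fires E t i"
  using gamma_pos[of t] by (auto simp: fires_def) (smt (verit) mult_nonneg_nonneg of_nat_0_le_iff)

end



context ws begin

lemma inv_lemma:
  fixes k M :: nat
  assumes nh: "\<And>t. k \<le> t \<Longrightarrow> t < k + M \<Longrightarrow> \<not> hit N E t"
  defines "Neg \<equiv> {i \<in> {1..N}. b E k i < 0}"
  defines "C \<equiv> \<lambda>i m. cnt (\<lambda>s. \<exists>j\<in>in_nbrs E i. fires E s j) k m"
  defines "Fc \<equiv> \<lambda>i m. cnt (\<lambda>s. fires E s i) k m"
  shows "m \<le> M \<Longrightarrow> (\<forall>i\<in>Neg. b E (k+m) i = b E k i) \<and>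
     (\<forall>i\<in>{1..N}-Neg. b E (k+m) i \<ge> 0
        \<and> (real (C i m) - real (out_deg E i) * real (Fc i m)) * gamma (k+m) \<le> b E (k+m) i
        \<and> C i m \<le> out_deg E i * Fc i m + out_deg E i)"
proof (induction m)
  case 0
  show ?case by (auto simp: C_def Fc_def Neg_def)
next
  case (Suc m)
  define t where "t = k + m"
  have tS: "k + Suc m = Suc t" by (simp add: t_def)
  have IH: "(\<forall>i\<in>Neg. b E t i = b E k i) \<and>
     (\<forall>i\<in>{1..N}-Neg. b E t i \<ge> 0
        \<and> (real (C i m) - real (out_deg E i) * real (Fc i m)) * gamma t \<le> b E t i
        \<and> C i m \<le> out_deg E i * Fc i m + out_deg E i)"
    using Suc by (simp add: t_def)
  have nht: "\<not> hit N E t" using nh Suc(2) by (simp add: t_def)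
  have gt: "0 < gamma t" "0 < gamma (Suc t)" "gamma (Suc t) \<le> gamma t"
    using gamma_pos gamma_Suc_le by auto
  have P1: "b E (Suc t) i = b E k i" if i: "i \<in> Neg" for i
  proof -
    have bt: "b E t i = b E k i" "b E t i < 0" using IH i by (auto simp: Neg_def)
    have iV: "i \<in> {1..N}" using i by (simp add: Neg_def)
    have "\<not> (\<exists>j\<in>in_nbrs E i. fires E t j)" using nht bt iV by (auto simp: hit_def)
    then have "(\<Sum>j\<in>in_nbrs E i. flag E (wts E t) j t) = 0" by (rule r_zero)
    moreover have "flag E (wts E t) i t = 0" using neg_not_fires[OF bt(2)] by (simp add: flag_eq)
    ultimately show ?thesis using b_step[of E t i] bt by simp
  qed
  have P2: "b E (Suc t) i \<ge> 0
        \<and> (real (C i (Suc m)) - real (out_deg E i) * real (Fc i (Suc m))) * gamma (Suc t) \<le> b E (Suc t) i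
        \<and> C i (Suc m) \<le> out_deg E i * Fc i (Suc m) + out_deg E i" if i: "i \<in> {1..N} - Neg" for i
  proof -
    define B where "B = b E t i"
    define r where "r = (\<Sum>j\<in>in_nbrs E i. flag E (wts E t) j t)"
    define dn where "dn = out_deg E i"
    define g where "g = gamma t"
    define rho where "rho = (if (\<exists>j\<in>in_nbrs E i. fires E t j) then 1 else (0::real))"
    have B0: "B \<ge> 0" and Bq: "(real (C i m) - real dn * real (Fc i m)) * g \<le> B"
      and Cn: "C i m \<le> dn * Fc i m + dn"
      using IH i by (auto simp: B_def dn_def g_def)
    have d1: "dn \<ge> 1" using deg_pos i by (simp add: dn_def)
    have g0: "g > 0" using gt by (simp add: g_def)
    have rrho: "rho \<le> r" using r_ge1 r_nonneg by (auto simp: rho_def r_def)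
    have rho0: "0 \<le> rho" by (simp add: rho_def)
    have grho: "g * rho \<le> g * r" using rrho g0 by (intro mult_left_mono) auto
    have grho0: "0 \<le> g * rho" using rho0 g0 by simp
    have g3: "gamma (Suc t) \<le> g" using gt by (simp add: g_def)
    have Csuc: "real (C i (Suc m)) = real (C i m) + rho"
      by (simp add: C_def rho_def t_def)
    have CsucN: "C i (Suc m) \<le> C i m + 1" by (simp add: C_def)
    show ?thesis
    proof (cases "fires E t i")
      case True
      have fl: "flag E (wts E t) i t = 1" using True by (simp add: flag_eq)
      have Bd: "B \<ge> real dn * g" using True by (simp add: fires_def B_def dn_def g_def)
      have st: "b E (Suc t) i = B + g * r - g * real dn"
        using b_step[of E t i] fl by (simp add: B_def g_def r_def dn_def)
      have Fsuc: "Fc i (Suc m) = Fc i m + 1" using True by (simp add: Fc_def t_def)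
      have nn: "b E (Suc t) i \<ge> 0" using st Bd grho grho0 mult.commute[of g "real dn"]
        by linarith
      have "(real (C i (Suc m)) - real dn * real (Fc i (Suc m))) * g
           = (real (C i m) - real dn * real (Fc i m)) * g + g * rho - g * real dn"
        by (simp add: Csuc Fsuc algebra_simps)
      also have "\<dots> \<le> b E (Suc t) i" using Bq grho st by linarith
      finally have calc: "(real (C i (Suc m)) - real dn * real (Fc i (Suc m))) * g \<le> b E (Suc t) i" .
      have "(real (C i (Suc m)) - real dn * real (Fc i (Suc m))) * gamma (Suc t) \<le> b E (Suc t) i"
        by (rule shrink[OF calc nn gt(2) g3])
      moreover have "C i (Suc m) \<le> dn * Fc i (Suc m) + dn"
      proof -
        have "dn * Fc i (Suc m) = dn * Fc i m + dn" by (simp add: Fsuc)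
        then show ?thesis using CsucN Cn d1 by linarith
      qed
      ultimately show ?thesis using nn by (simp add: dn_def)
    next
      case False
      have fl: "flag E (wts E t) i t = 0" using False by (simp add: flag_eq)
      have Bd: "B < real dn * g" using False by (simp add: fires_def B_def dn_def g_def)
      have st: "b E (Suc t) i = B + g * r"
        using b_step[of E t i] fl by (simp add: B_def g_def r_def dn_def)
      have Fsuc: "Fc i (Suc m) = Fc i m" using False by (simp add: Fc_def t_def)
      have nn: "b E (Suc t) i \<ge> 0" using st B0 grho grho0
        by linarith
      have "(real (C i (Suc m)) - real dn * real (Fc i (Suc m))) * g
           = (real (C i m) - real dn * real (Fc i m)) * g + g * rho"
        by (simp add: Csuc Fsuc algebra_simps)
      also have "\<dots> \<le> b E (Suc t) i" using Bq grho st by linarith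
      finally have calc: "(real (C i (Suc m)) - real dn * real (Fc i (Suc m))) * g \<le> b E (Suc t) i" .
      have "(real (C i (Suc m)) - real dn * real (Fc i (Suc m))) * gamma (Suc t) \<le> b E (Suc t) i"
        by (rule shrink[OF calc nn gt(2) g3])
      moreover have "C i (Suc m) \<le> dn * Fc i (Suc m) + dn"
      proof -
        have "(real (C i m) - real dn * real (Fc i m)) * g < real dn * g" using Bq Bd by linarith
        then have "real (C i m) - real dn * real (Fc i m) < real dn" using g0 by simp
        then have "real (C i m) < real (dn * Fc i m + dn)" by simp
        then have "C i m < dn * Fc i m + dn" by linarith
        then show ?thesis using CsucN Fsuc by simp
      qed
      ultimately show ?thesis using nn by (simp add: dn_def)
    qed
  qed
  show ?case unfolding tS using P1 P2 by blast
qed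

end



lemma cross: "(x, w) \<in> E\<^sup>* \<Longrightarrow> w \<in> S \<Longrightarrow> x \<notin> S \<Longrightarrow> \<exists>u v. (u, v) \<in> E \<and> u \<notin> S \<and> v \<in> S"
proof (induction rule: converse_rtrancl_induct)
  case base
  then show ?case by simp
next
  case (step y z)
  then show ?case by (cases "z \<in> S") auto
qed

context ws begin

lemma no_hit_contra:
  assumes hyp: "eps_norm1 N E k \<ge> 2 * real N * (real N - 1) * gamma k"
    and nh: "\<And>t. k \<le> t \<Longrightarrow> t < k + N ^ (2 * N) \<Longrightarrow> \<not> hit N E t"
  shows False
proof -
  define M where "M = N ^ (2 * N)"
  define Neg where "Neg = {i \<in> {1..N}. b E k i < 0}"
  define C where "C = (\<lambda>i m. cnt (\<lambda>s. \<exists>j\<in>in_nbrs E i. fires E s j) k m)"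
  define Fc where "Fc = (\<lambda>i m. cnt (\<lambda>s. fires E s i) k m)"
  have nhM: "\<And>t. k \<le> t \<Longrightarrow> t < k + M \<Longrightarrow> \<not> hit N E t" using nh by (simp add: M_def)
  have inv: "(\<forall>i\<in>Neg. b E (k+m) i = b E k i) \<and>
     (\<forall>i\<in>{1..N}-Neg. b E (k+m) i \<ge> 0
        \<and> (real (C i m) - real (out_deg E i) * real (Fc i m)) * gamma (k+m) \<le> b E (k+m) i
        \<and> C i m \<le> out_deg E i * Fc i m + out_deg E i)" if "m \<le> M" for m
    using inv_lemma[of k M m, OF nhM that] unfolding Neg_def C_def Fc_def by simp
  have N1: "N \<ge> 1" using N2 by simp
  have NegV: "Neg \<subseteq> {1..N}" by (auto simp: Neg_def)
  have finV: "finite {1..N}" by simp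
  have gk: "gamma k > 0" by (rule gamma_pos)
  have hpos: "2 * real N * (real N - 1) * gamma k > 0" using N2 gk by simp
  have split: "(\<Sum>i\<in>{1..N}. f i) = (\<Sum>i\<in>{1..N}-Neg. f i) + (\<Sum>i\<in>Neg. f i)" for f :: "nat \<Rightarrow> real"
    using sum.subset_diff[OF NegV finV] by simp
  have epsk: "eps_norm1 N E k = - 2 * (\<Sum>i\<in>Neg. b E k i)"
  proof -
    have a: "(\<Sum>i\<in>{1..N}-Neg. \<bar>b E k i\<bar>) = (\<Sum>i\<in>{1..N}-Neg. b E k i)"
      by (rule sum.cong) (auto simp: Neg_def)
    have c: "(\<Sum>i\<in>Neg. \<bar>b E k i\<bar>) = - (\<Sum>i\<in>Neg. b E k i)"
      by (simp add: sum_negf[symmetric]) (rule sum.cong, auto simp: Neg_def)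
    have z: "(\<Sum>i\<in>{1..N}-Neg. b E k i) + (\<Sum>i\<in>Neg. b E k i) = 0"
      using sum_b_zero[of k] split[of "b E k"] by simp
    show ?thesis unfolding eps_norm1_def split[of "\<lambda>i. \<bar>b E k i\<bar>"] a c using z by linarith
  qed
  have Neg_ne: "Neg \<noteq> {}"
  proof
    assume "Neg = {}"
    then have "eps_norm1 N E k = 0" using epsk by simp
    then show False using hyp hpos by linarith
  qed
  have cardNeg: "real (card ({1..N} - Neg)) \<le> real N - 1"
  proof -
    have "card Neg \<ge> 1" using Neg_ne NegV finV
      by (metis One_nat_def Suc_leI card_gt_0_iff finite_subset)
    moreover have "card ({1..N} - Neg) = N - card Neg" using NegV finV
      by (simp add: card_Diff_subset finite_subset)
    moreover have "card Neg \<le> N" using card_mono[OF finV NegV] by simp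
    ultimately show ?thesis by (simp add: of_nat_diff)
  qed
  have fire_each: "\<exists>u\<in>{1..N}. fires E (k+m) u" if m: "m < M" for m
  proof (rule ccontr)
    assume nf: "\<not> (\<exists>u\<in>{1..N}. fires E (k+m) u)"
    define t where "t = k + m"
    have I: "\<forall>i\<in>Neg. b E t i = b E k i" using inv[of m] m by (simp add: t_def)
    have gt: "gamma t > 0" "gamma t \<le> gamma k" using gamma_pos gamma_antimono by (auto simp: t_def)
    have le: "b E t i \<le> (real N - 1) * gamma t" if i: "i \<in> {1..N} - Neg" for i
    proof -
      have "\<not> fires E t i" using nf i by (auto simp: t_def)
      then have "b E t i < real (out_deg E i) * gamma t" by (simp add: fires_def)
      moreover have "real (out_deg E i) \<le> real N - 1" using deg_le[of i] N1 by linarith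
      then have "real (out_deg E i) * gamma t \<le> (real N - 1) * gamma t"
        using gt by (intro mult_right_mono) auto
      ultimately show ?thesis by linarith
    qed
    have s1: "(\<Sum>i\<in>{1..N}-Neg. b E t i) \<le> real (card ({1..N} - Neg)) * ((real N - 1) * gamma t)"
      using sum_mono[of "{1..N}-Neg" "b E t" "\<lambda>_. (real N - 1) * gamma t"] le by simp
    have p0: "(real N - 1) * gamma t > 0" using N2 gt by simp
    have s2: "real (card ({1..N} - Neg)) * ((real N - 1) * gamma t) \<le> (real N - 1) * ((real N - 1) * gamma t)"
      by (rule mult_right_mono[OF cardNeg]) (use p0 in linarith)
    have s3: "(real N - 1) * ((real N - 1) * gamma t) < real N * ((real N - 1) * gamma t)"
      using p0 mult_strict_right_mono[of "real N - 1" "real N" "(real N - 1) * gamma t"] by simp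
    have negsum: "(\<Sum>i\<in>Neg. b E t i) = (\<Sum>i\<in>Neg. b E k i)" using I by simp
    have z: "(\<Sum>i\<in>{1..N}-Neg. b E t i) + (\<Sum>i\<in>Neg. b E t i) = 0"
      using sum_b_zero[of t] split[of "b E t"] by simp
    have s4: "(\<Sum>i\<in>{1..N}-Neg. b E t i) \<ge> real N * (real N - 1) * gamma k"
      using z negsum epsk hyp by linarith
    have s5: "real N * (real N - 1) * gamma k \<ge> real N * ((real N - 1) * gamma t)"
      using gt N2 by (simp add: mult.assoc mult_left_mono)
    show False using s1 s2 s3 s4 s5 by linarith
  qed
  have sumF: "m \<le> (\<Sum>u\<in>{1..N}. Fc u m)" if "m \<le> M" for m
    using that
  proof (induction m)
    case 0 then show ?case by simp
  next
    case (Suc m)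
    obtain u where u: "u \<in> {1..N}" "fires E (k+m) u" using fire_each[of m] Suc(2) by auto
    have "1 \<le> (\<Sum>u\<in>{1..N}. (if fires E (k+m) u then 1 else 0::nat))"
      using member_le_sum[of u "{1..N}" "\<lambda>u. (if fires E (k+m) u then 1 else 0::nat)"] u by simp
    moreover have "(\<Sum>u\<in>{1..N}. Fc u (Suc m)) = (\<Sum>u\<in>{1..N}. Fc u m) + (\<Sum>u\<in>{1..N}. (if fires E (k+m) u then 1 else 0::nat))"
      by (simp add: Fc_def sum.distrib)
    ultimately show ?case using Suc by simp
  qed
  have FcNeg: "Fc w M = 0" if w: "w \<in> Neg" for w
    unfolding Fc_def
  proof (rule cnt_zero)
    fix s assume s: "k \<le> s" "s < k + M"
    have "b E (k + (s - k)) w = b E k w" using inv[of "s-k"] s w by simp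
    then have "b E s w < 0" using s w by (simp add: Neg_def)
    then show "\<not> fires E s w" by (rule neg_not_fires)
  qed
  have CNeg: "C v M = 0" if v: "v \<in> Neg" for v
    unfolding C_def
  proof (rule cnt_zero)
    fix s assume s: "k \<le> s" "s < k + M"
    have "b E (k + (s - k)) v = b E k v" using inv[of "s-k"] s v by simp
    then have "b E s v < 0" using s v by (simp add: Neg_def)
    then show "\<not> (\<exists>j\<in>in_nbrs E v. fires E s j)" using nhM[OF s] v by (auto simp: hit_def Neg_def)
  qed
  have CFc: "C v M \<le> (N - 1) * (Fc v M + 1)" if v: "v \<in> {1..N} - Neg" for v
  proof -
    have "C v M \<le> out_deg E v * Fc v M + out_deg E v" using inv[of M] v by blast
    then have "C v M \<le> out_deg E v * (Fc v M + 1)" by (simp add: algebra_simps)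
    also have "\<dots> \<le> (N - 1) * (Fc v M + 1)" using deg_le by (intro mult_right_mono) auto
    finally show ?thesis .
  qed
  have edge: "Fc u M \<le> C v M" if e: "(u, v) \<in> E" for u v
    unfolding Fc_def C_def
    by (rule cnt_mono) (use e in \<open>auto simp: in_nbrs_def\<close>)
  have grow: "\<exists>S. Neg \<subseteq> S \<and> S \<subseteq> {1..N} \<and> (S = {1..N} \<or> j \<le> card S) \<and> (\<forall>u\<in>S. Fc u M + 1 \<le> N ^ j)" for j
  proof (induction j)
    case 0
    show ?case using FcNeg NegV by (intro exI[of _ Neg]) auto
  next
    case (Suc j)
    then obtain S where S: "Neg \<subseteq> S" "S \<subseteq> {1..N}" "S = {1..N} \<or> j \<le> card S" "\<forall>u\<in>S. Fc u M + 1 \<le> N ^ j"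
      by blast
    have pj: "N ^ j \<le> N ^ Suc j" using N1 by simp
    show ?case
    proof (cases "S = {1..N}")
      case True
      then show ?thesis using S pj by (intro exI[of _ S]) (auto intro: le_trans)
    next
      case False
      then obtain x where x: "x \<in> {1..N}" "x \<notin> S" using S(2) by blast
      obtain w where w: "w \<in> Neg" using Neg_ne by blast
      have "(x, w) \<in> E\<^sup>*" using sc x w NegV by (auto simp: strongly_connected_def)
      then obtain u v where uv: "(u, v) \<in> E" "u \<notin> S" "v \<in> S" using cross[of x w E S] w S(1) x by blast
      have uV: "u \<in> {1..N}" using uv Esub by auto
      have finS: "finite S" using S(2) finite_subset by blast
      have bound: "Fc u M + 1 \<le> N ^ Suc j"
      proof -
        have "Fc u M \<le> (N - 1) * N ^ j"
        proof (cases "v \<in> Neg")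
          case True
          then show ?thesis using edge[OF uv(1)] CNeg by simp
        next
          case False
          then have "v \<in> {1..N} - Neg" using uv S(2) by auto
          then have "C v M \<le> (N - 1) * (Fc v M + 1)" by (rule CFc)
          also have "\<dots> \<le> (N - 1) * N ^ j" using S(4) uv(3) by (intro mult_left_mono) auto
          finally show ?thesis using edge[OF uv(1)] by simp
        qed
        moreover have "N ^ Suc j = (N - 1) * N ^ j + N ^ j" using N1
          by (simp add: algebra_simps)
        moreover have "1 \<le> N ^ j" using N1 by simp
        ultimately show ?thesis by linarith
      qed
      have "card (insert u S) = Suc (card S)" using finS uv(2) by simp
      then have "Suc j \<le> card (insert u S)" using S(3) False by simp
      moreover have "\<forall>y\<in>insert u S. Fc y M + 1 \<le> N ^ Suc j" using bound S(4) pj by (auto intro: le_trans)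
      ultimately show ?thesis using S uV by (intro exI[of _ "insert u S"]) auto
    qed
  qed
  obtain S where S: "Neg \<subseteq> S" "S \<subseteq> {1..N}" "S = {1..N} \<or> N \<le> card S" "\<forall>u\<in>S. Fc u M + 1 \<le> N ^ N"
    using grow[of N] by blast
  have SV: "S = {1..N}"
  proof (cases "S = {1..N}")
    case False
    then have "N \<le> card S" using S(3) by simp
    then have "card {1..N} \<le> card S" by simp
    then show ?thesis using card_seteq[OF finV S(2)] by simp
  qed simp
  have "(\<Sum>u\<in>{1..N}. Fc u M + 1) \<le> (\<Sum>u\<in>{1..N}. N ^ N)"
    using S(4) SV by (intro sum_mono) auto
  moreover have "(\<Sum>u\<in>{1..N}. Fc u M + 1) = (\<Sum>u\<in>{1..N}. Fc u M) + N"
    unfolding sum.distrib by simp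
  ultimately have "(\<Sum>u\<in>{1..N}. Fc u M) + N \<le> N * N ^ N" by simp
  moreover have "M \<le> (\<Sum>u\<in>{1..N}. Fc u M)" using sumF by simp
  moreover have "N * N ^ N \<le> M" unfolding M_def
  proof -
    have "N * N ^ N = N ^ (N + 1)" by simp
    also have "\<dots> \<le> N ^ (2 * N)" using N1 by (intro power_increasing) auto
    finally show "N * N ^ N \<le> N ^ (2 * N)" .
  qed
  ultimately show False using N1 by linarith
qed

end

theorem proposition2:
  fixes N :: nat and E :: "(nat \<times> nat) set" and k :: nat
  assumes "N \<ge> 2"
    and "E \<subseteq> {1..N} \<times> {1..N}"
    and "\<forall>i. (i, i) \<notin> E"
    and "strongly_connected N E"
    and "eps_norm1 N E k \<ge> 2 * real N * (real N - 1) * gamma k"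
  shows "eps_norm1 N E (k + N ^ (2 * N)) \<le> eps_norm1 N E k - 2 * gamma (k + N ^ (2 * N))"
proof -
  interpret ws N E using assms(1-4) by unfold_locales
  show ?thesis
  proof (cases "\<exists>t. k \<le> t \<and> t < k + N ^ (2 * N) \<and> hit N E t")
    case True
    then obtain t where t: "k \<le> t" "t < k + N ^ (2 * N)" "hit N E t" by blast
    have "eps_norm1 N E (k + N ^ (2 * N)) \<le> eps_norm1 N E (Suc t)"
      using t by (intro norm_mono) simp
    also have "\<dots> \<le> eps_norm1 N E t - 2 * gamma t" using norm_step[of t] t by simp
    also have "\<dots> \<le> eps_norm1 N E k - 2 * gamma t" using norm_mono[OF t(1)] by simp
    also have "\<dots> \<le> eps_norm1 N E k - 2 * gamma (k + N ^ (2 * N))"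
      using gamma_antimono[of t "k + N ^ (2 * N)"] t by simp
    finally show ?thesis .
  next
    case False
    then show ?thesis using no_hit_contra[OF assms(5)] by blast
  qed
qed


end
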